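(* Let $\mathcal C$ be a decomposition finite category and $\mathscr B=\mathbb Z[\mathrm{Mor}(\mathcal C)]$ with coproduct $\Delta(\phi)=\sum_{\phi=\phi_1\circ\phi_0}\phi_0\otimes\phi_1$. Let $\mathcal C_\sim\subset\mathscr B$ be the subgroup spanned by all $f-g$ with $f\sim g$. Then $\Delta(\mathcal C_\sim)\subset\mathscr B\otimes\mathcal C_\sim+\mathcal C_\sim\otimes\mathscr B$, so $\Delta$ descends to a coassociative coproduct on $\mathscr B/\mathcal C_\sim$. Furthermore, after extending scalars to a commutative ring $R$ in which $|\mathrm{Iso}(X)|\,|\mathrm{Aut}(X)|$ is invertible for every object $X$ (e.g. $R=\mathbb Q$), the map $\bar\epsilon$ on $R[\mathrm{Mor}(\mathcal C)]/\mathcal C_\sim$ defined on classes of morphisms by $\bar\epsilon([f])=\frac{1}{|\mathrm{Iso}(X)|\,|\mathrm{Aut}(X)|}$ if $[f]=[\mathrm{id}_X]$ and $\bar\epsilon([f])=0$ otherwise, is a two-sided counit.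
   Context: A category is decomposition finite if every morphism has only finitely many factorizations $\phi=\phi_1\circ\phi_0$ (then $\mathrm{Aut}(X)$ and the set $\mathrm{Iso}(X)$ of objects isomorphic to $X$ are finite). For morphisms $f\colon X\to Y$ and $g\colon X'\to Y'$, $f\sim g$ means there are isomorphisms $\sigma\colon X\to X'$ and $\sigma'\colon Y\to Y'$ with $\sigma'\circ f=g\circ\sigma$; $[f]$ denotes the class of $f$ in $\mathscr B/\mathcal C_\sim$. Note $f\sim\mathrm{id}_X$ iff $f$ is an isomorphism between objects isomorphic to $X$. *)

theory Defs
  imports "HOL-Library.Poly_Mapping"
begin

text \<open>A (small) category given concretely: objects, morphisms, domain, codomain,
  composition (Comp C g f is g o f) and identities.\<close>

record ('o, 'm) category =
  Ob :: "'o set"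
  Mor :: "'m set"
  Dom :: "'m \<Rightarrow> 'o"
  Cod :: "'m \<Rightarrow> 'o"
  Comp :: "'m \<Rightarrow> 'm \<Rightarrow> 'm"
  Ident :: "'o \<Rightarrow> 'm"

definition is_category :: "('o, 'm) category \<Rightarrow> bool" where
  "is_category C \<longleftrightarrow>
     (\<forall>f\<in>Mor C. Dom C f \<in> Ob C \<and> Cod C f \<in> Ob C) \<and>
     (\<forall>X\<in>Ob C. Ident C X \<in> Mor C \<and> Dom C (Ident C X) = X \<and> Cod C (Ident C X) = X) \<and>
     (\<forall>f\<in>Mor C. \<forall>g\<in>Mor C. Cod C f = Dom C g \<longrightarrow>
         Comp C g f \<in> Mor C \<and> Dom C (Comp C g f) = Dom C f \<and> Cod C (Comp C g f) = Cod C g) \<and>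
     (\<forall>f\<in>Mor C. \<forall>g\<in>Mor C. \<forall>h\<in>Mor C. Cod C f = Dom C g \<longrightarrow> Cod C g = Dom C h \<longrightarrow>
         Comp C h (Comp C g f) = Comp C (Comp C h g) f) \<and>
     (\<forall>f\<in>Mor C. Comp C f (Ident C (Dom C f)) = f \<and> Comp C (Ident C (Cod C f)) f = f)"

definition decomps :: "('o, 'm) category \<Rightarrow> 'm \<Rightarrow> ('m \<times> 'm) set" where
  "decomps C \<phi> = {(\<phi>0, \<phi>1). \<phi>0 \<in> Mor C \<and> \<phi>1 \<in> Mor C \<and> Cod C \<phi>0 = Dom C \<phi>1 \<and> Comp C \<phi>1 \<phi>0 = \<phi>}"

definition decomposition_finite :: "('o, 'm) category \<Rightarrow> bool" where
  "decomposition_finite C \<longleftrightarrow> (\<forall>\<phi>\<in>Mor C. finite (decomps C \<phi>))"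

definition is_iso :: "('o, 'm) category \<Rightarrow> 'm \<Rightarrow> bool" where
  "is_iso C \<sigma> \<longleftrightarrow> \<sigma> \<in> Mor C \<and> (\<exists>\<tau>\<in>Mor C. Dom C \<tau> = Cod C \<sigma> \<and> Cod C \<tau> = Dom C \<sigma> \<and>
      Comp C \<tau> \<sigma> = Ident C (Dom C \<sigma>) \<and> Comp C \<sigma> \<tau> = Ident C (Cod C \<sigma>))"

definition Aut :: "('o, 'm) category \<Rightarrow> 'o \<Rightarrow> 'm set" where
  "Aut C X = {\<sigma>. is_iso C \<sigma> \<and> Dom C \<sigma> = X \<and> Cod C \<sigma> = X}"

definition Iso :: "('o, 'm) category \<Rightarrow> 'o \<Rightarrow> 'o set" where
  "Iso C X = {Y \<in> Ob C. \<exists>\<sigma>. is_iso C \<sigma> \<and> Dom C \<sigma> = X \<and> Cod C \<sigma> = Y}"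

definition mor_sim :: "('o, 'm) category \<Rightarrow> 'm \<Rightarrow> 'm \<Rightarrow> bool" where
  "mor_sim C f g \<longleftrightarrow> f \<in> Mor C \<and> g \<in> Mor C \<and>
     (\<exists>\<sigma> \<sigma>'. is_iso C \<sigma> \<and> is_iso C \<sigma>' \<and> Dom C \<sigma> = Dom C f \<and> Cod C \<sigma> = Dom C g \<and>
        Dom C \<sigma>' = Cod C f \<and> Cod C \<sigma>' = Cod C g \<and> Comp C \<sigma>' f = Comp C g \<sigma>)"

text \<open>Free modules: R[Mor C] is represented by finitely supported functions
  from morphisms to R with support in Mor C; the tensor square by finitely supported
  functions on pairs of morphisms, etc.\<close>

definition free_mod :: "('o, 'm) category \<Rightarrow> ('m \<Rightarrow>\<^sub>0 'r::comm_ring_1) set" where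
  "free_mod C = {x. Poly_Mapping.keys x \<subseteq> Mor C}"

inductive_set lspan :: "('a \<Rightarrow>\<^sub>0 'r::comm_ring_1) set \<Rightarrow> ('a \<Rightarrow>\<^sub>0 'r) set" for S where
  lspan_zero: "0 \<in> lspan S"
| lspan_step: "x \<in> S \<Longrightarrow> y \<in> lspan S \<Longrightarrow> Poly_Mapping.map (\<lambda>v. c * v) x + y \<in> lspan S"

definition sim_gens :: "('o, 'm) category \<Rightarrow> ('m \<Rightarrow>\<^sub>0 'r::comm_ring_1) set" where
  "sim_gens C = {Poly_Mapping.single f 1 - Poly_Mapping.single g 1 | f g. mor_sim C f g}"

definition Csim :: "('o, 'm) category \<Rightarrow> ('m \<Rightarrow>\<^sub>0 'r::comm_ring_1) set" where
  "Csim C = lspan (sim_gens C)"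

definition tens :: "('m \<Rightarrow>\<^sub>0 'r::comm_ring_1) \<Rightarrow> ('m \<Rightarrow>\<^sub>0 'r) \<Rightarrow> ('m \<times> 'm \<Rightarrow>\<^sub>0 'r)" where
  "tens u v = (\<Sum>a\<in>Poly_Mapping.keys u. \<Sum>b\<in>Poly_Mapping.keys v. Poly_Mapping.single (a, b) (Poly_Mapping.lookup u a * Poly_Mapping.lookup v b))"

definition tens_sub :: "('m \<Rightarrow>\<^sub>0 'r::comm_ring_1) set \<Rightarrow> ('m \<Rightarrow>\<^sub>0 'r) set \<Rightarrow> ('m \<times> 'm \<Rightarrow>\<^sub>0 'r) set" where
  "tens_sub U V = lspan {tens u v | u v. u \<in> U \<and> v \<in> V}"

definition sub_sum :: "('a \<Rightarrow>\<^sub>0 'r::comm_ring_1) set \<Rightarrow> ('a \<Rightarrow>\<^sub>0 'r) set \<Rightarrow> ('a \<Rightarrow>\<^sub>0 'r) set" where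
  "sub_sum U V = {u + v | u v. u \<in> U \<and> v \<in> V}"

definition coprod :: "('o, 'm) category \<Rightarrow> ('m \<Rightarrow>\<^sub>0 'r::comm_ring_1) \<Rightarrow> ('m \<times> 'm \<Rightarrow>\<^sub>0 'r)" where
  "coprod C x = (\<Sum>\<phi>\<in>Poly_Mapping.keys x. \<Sum>d\<in>decomps C \<phi>. Poly_Mapping.single d (Poly_Mapping.lookup x \<phi>))"

definition coprod_id :: "('o, 'm) category \<Rightarrow> ('m \<times> 'm \<Rightarrow>\<^sub>0 'r::comm_ring_1) \<Rightarrow> ('m \<times> 'm \<times> 'm \<Rightarrow>\<^sub>0 'r)" where
  "coprod_id C y = (\<Sum>p\<in>Poly_Mapping.keys y. \<Sum>d\<in>decomps C (fst p).
      Poly_Mapping.single (fst d, snd d, snd p) (Poly_Mapping.lookup y p))"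

definition id_coprod :: "('o, 'm) category \<Rightarrow> ('m \<times> 'm \<Rightarrow>\<^sub>0 'r::comm_ring_1) \<Rightarrow> ('m \<times> 'm \<times> 'm \<Rightarrow>\<^sub>0 'r)" where
  "id_coprod C y = (\<Sum>p\<in>Poly_Mapping.keys y. \<Sum>d\<in>decomps C (snd p).
      Poly_Mapping.single (fst p, fst d, snd d) (Poly_Mapping.lookup y p))"

definition unit_inv :: "'r::comm_ring_1 \<Rightarrow> 'r" where
  "unit_inv r = (SOME s. r * s = 1)"

definition eps_val :: "('o, 'm) category \<Rightarrow> 'm \<Rightarrow> 'r::comm_ring_1" where
  "eps_val C f = (if \<exists>X\<in>Ob C. mor_sim C f (Ident C X)
     then (let X = (SOME X. X \<in> Ob C \<and> mor_sim C f (Ident C X))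
           in unit_inv (of_nat (card (Iso C X) * card (Aut C X))))
     else 0)"

definition eps :: "('o, 'm) category \<Rightarrow> ('m \<Rightarrow>\<^sub>0 'r::comm_ring_1) \<Rightarrow> 'r" where
  "eps C x = (\<Sum>f\<in>Poly_Mapping.keys x. Poly_Mapping.lookup x f * eps_val C f)"

definition eps_id :: "('o, 'm) category \<Rightarrow> ('m \<times> 'm \<Rightarrow>\<^sub>0 'r::comm_ring_1) \<Rightarrow> ('m \<Rightarrow>\<^sub>0 'r)" where
  "eps_id C y = (\<Sum>p\<in>Poly_Mapping.keys y. Poly_Mapping.single (snd p) (eps_val C (fst p) * Poly_Mapping.lookup y p))"

definition id_eps :: "('o, 'm) category \<Rightarrow> ('m \<times> 'm \<Rightarrow>\<^sub>0 'r::comm_ring_1) \<Rightarrow> ('m \<Rightarrow>\<^sub>0 'r)" where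
  "id_eps C y = (\<Sum>p\<in>Poly_Mapping.keys y. Poly_Mapping.single (fst p) (Poly_Mapping.lookup y p * eps_val C (snd p)))"

end

theory Submission
  imports Defs
begin

locale cat = fixes C :: "('o,'m) category" assumes cat: "is_category C"
begin

lemma dom_ob: "f \<in> Mor C \<Longrightarrow> Dom C f \<in> Ob C" and cod_ob: "f \<in> Mor C \<Longrightarrow> Cod C f \<in> Ob C"
  using cat unfolding is_category_def by auto
lemma id_mor[simp]: "X \<in> Ob C \<Longrightarrow> Ident C X \<in> Mor C"
  and dom_id[simp]: "X \<in> Ob C \<Longrightarrow> Dom C (Ident C X) = X"
  and cod_id[simp]: "X \<in> Ob C \<Longrightarrow> Cod C (Ident C X) = X"
  using cat unfolding is_category_def by auto
lemma comp_mor[simp]: "f \<in> Mor C \<Longrightarrow> g \<in> Mor C \<Longrightarrow> Cod C f = Dom C g \<Longrightarrow> Comp C g f \<in> Mor C"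
  and dom_comp[simp]: "f \<in> Mor C \<Longrightarrow> g \<in> Mor C \<Longrightarrow> Cod C f = Dom C g \<Longrightarrow> Dom C (Comp C g f) = Dom C f"
  and cod_comp[simp]: "f \<in> Mor C \<Longrightarrow> g \<in> Mor C \<Longrightarrow> Cod C f = Dom C g \<Longrightarrow> Cod C (Comp C g f) = Cod C g"
  using cat unfolding is_category_def by auto
lemma assoc: "f \<in> Mor C \<Longrightarrow> g \<in> Mor C \<Longrightarrow> h \<in> Mor C \<Longrightarrow> Cod C f = Dom C g \<Longrightarrow> Cod C g = Dom C h \<Longrightarrow>
   Comp C h (Comp C g f) = Comp C (Comp C h g) f"
  using cat unfolding is_category_def by auto
lemma id_r[simp]: "f \<in> Mor C \<Longrightarrow> Comp C f (Ident C (Dom C f)) = f"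
  and id_l[simp]: "f \<in> Mor C \<Longrightarrow> Comp C (Ident C (Cod C f)) f = f"
  using cat unfolding is_category_def by auto

lemma id_r'[simp]: "f \<in> Mor C \<Longrightarrow> Dom C f = X \<Longrightarrow> Comp C f (Ident C X) = f"
  and id_l'[simp]: "f \<in> Mor C \<Longrightarrow> Cod C f = X \<Longrightarrow> Comp C (Ident C X) f = f"
  by auto

lemma iso_mor: "is_iso C s \<Longrightarrow> s \<in> Mor C" unfolding is_iso_def by auto

lemma iso_invE:
  assumes "is_iso C s"
  obtains t where "t \<in> Mor C" "is_iso C t" "Dom C t = Cod C s" "Cod C t = Dom C s"
    "Comp C t s = Ident C (Dom C s)" "Comp C s t = Ident C (Cod C s)"
proof -
  from assms obtain t where t: "t\<in>Mor C" "Dom C t = Cod C s" "Cod C t = Dom C s"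
      "Comp C t s = Ident C (Dom C s)" "Comp C s t = Ident C (Cod C s)"
    unfolding is_iso_def by auto
  have "is_iso C t" unfolding is_iso_def using t assms iso_mor by auto
  then show ?thesis using t that by auto
qed

lemma id_iso: "X \<in> Ob C \<Longrightarrow> is_iso C (Ident C X)"
  unfolding is_iso_def by (rule conjI, simp, rule bexI[of _ "Ident C X"]) auto

lemma comp_iso: assumes "is_iso C s" "is_iso C s'" "Cod C s = Dom C s'"
  shows "is_iso C (Comp C s' s)"
proof -
  obtain t where t: "t \<in> Mor C" "is_iso C t" "Dom C t = Cod C s" "Cod C t = Dom C s"
    "Comp C t s = Ident C (Dom C s)" "Comp C s t = Ident C (Cod C s)" using iso_invE[OF assms(1)] by blast
  obtain t' where t': "t' \<in> Mor C" "is_iso C t'" "Dom C t' = Cod C s'" "Cod C t' = Dom C s'"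
    "Comp C t' s' = Ident C (Dom C s')" "Comp C s' t' = Ident C (Cod C s')" using iso_invE[OF assms(2)] by blast
  have m: "s \<in> Mor C" "s' \<in> Mor C" using assms iso_mor by auto
  have 1: "Comp C (Comp C t t') (Comp C s' s) = Ident C (Dom C s)"
  proof -
    have "Comp C (Comp C t t') (Comp C s' s) = Comp C t (Comp C t' (Comp C s' s))"
      using m t t' assms assoc[of "Comp C s' s" t' t] by simp
    also have "\<dots> = Comp C t (Comp C (Comp C t' s') s)" using m t t' assms assoc[of s s' t'] by simp
    also have "\<dots> = Ident C (Dom C s)" using m t t' assms by simp
    finally show ?thesis .
  qed
  have 2: "Comp C (Comp C s' s) (Comp C t t') = Ident C (Cod C s')"
  proof -
    have "Comp C (Comp C s' s) (Comp C t t') = Comp C s' (Comp C s (Comp C t t'))"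
      using m t t' assms assoc[of "Comp C t t'" s s'] by simp
    also have "\<dots> = Comp C s' (Comp C (Comp C s t) t')" using m t t' assms assoc[of t' t s] by simp
    also have "\<dots> = Ident C (Cod C s')" using m t t' assms cod_ob by simp
    finally show ?thesis .
  qed
  show ?thesis unfolding is_iso_def
    apply (rule conjI) using m assms apply simp
    apply (rule bexI[of _ "Comp C t t'"]) using m t t' assms 1 2 by auto
qed

lemma iso_cancel_l: "is_iso C s \<Longrightarrow> t \<in> Mor C \<Longrightarrow> Dom C t = Cod C s \<Longrightarrow> Comp C t s = Ident C (Dom C s)
  \<Longrightarrow> f \<in> Mor C \<Longrightarrow> Cod C f = Dom C s \<Longrightarrow> Comp C t (Comp C s f) = f"
  using assoc[of f s t] iso_mor[of s] by simp

lemma iso_cancel_r: "is_iso C s \<Longrightarrow> t \<in> Mor C \<Longrightarrow> Cod C t = Dom C s \<Longrightarrow> Comp C s t = Ident C (Cod C s)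
  \<Longrightarrow> f \<in> Mor C \<Longrightarrow> Dom C f = Cod C s \<Longrightarrow> Comp C (Comp C f s) t = f"
  using assoc[of t s f] iso_mor[of s] by simp

lemma ms_refl: "f \<in> Mor C \<Longrightarrow> mor_sim C f f"
  unfolding mor_sim_def
  by (rule conjI, simp, rule conjI, simp, rule exI[of _ "Ident C (Dom C f)"], rule exI[of _ "Ident C (Cod C f)"])
     (auto simp: id_iso dom_ob cod_ob)

lemma ms_sym: assumes "mor_sim C f g" shows "mor_sim C g f"
proof -
  obtain s s' where m: "f \<in> Mor C" "g \<in> Mor C" and s: "is_iso C s" "is_iso C s'" "Dom C s = Dom C f" "Cod C s = Dom C g"
    "Dom C s' = Cod C f" "Cod C s' = Cod C g" "Comp C s' f = Comp C g s"
    using assms unfolding mor_sim_def by blast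
  obtain t where t: "t \<in> Mor C" "is_iso C t" "Dom C t = Cod C s" "Cod C t = Dom C s"
    "Comp C t s = Ident C (Dom C s)" "Comp C s t = Ident C (Cod C s)" using iso_invE[OF s(1)] by blast
  obtain t' where t': "t' \<in> Mor C" "is_iso C t'" "Dom C t' = Cod C s'" "Cod C t' = Dom C s'"
    "Comp C t' s' = Ident C (Dom C s')" "Comp C s' t' = Ident C (Cod C s')" using iso_invE[OF s(2)] by blast
  have sm: "s \<in> Mor C" "s' \<in> Mor C" using s iso_mor by auto
  have "Comp C t' g = Comp C t' (Comp C (Comp C g s) t)" using iso_cancel_r[OF s(1) t(1)] t m s by simp
  also have "\<dots> = Comp C t' (Comp C (Comp C s' f) t)" using s by simp
  also have "\<dots> = Comp C t' (Comp C s' (Comp C f t))" using assoc[of t f s'] m sm t s by simp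
  also have "\<dots> = Comp C f t" using iso_cancel_l[OF s(2) t'(1)] t' m s t by simp
  finally have eq: "Comp C t' g = Comp C f t" .
  show ?thesis unfolding mor_sim_def
    by (rule conjI, fact, rule conjI, fact, rule exI[of _ t], rule exI[of _ t']) (use s t t' eq in auto)
qed

lemma ms_trans: assumes "mor_sim C f g" "mor_sim C g h" shows "mor_sim C f h"
proof -
  obtain s s' where m: "f \<in> Mor C" "g \<in> Mor C" and s: "is_iso C s" "is_iso C s'" "Dom C s = Dom C f" "Cod C s = Dom C g"
    "Dom C s' = Cod C f" "Cod C s' = Cod C g" "Comp C s' f = Comp C g s"
    using assms unfolding mor_sim_def by blast
  obtain r r' where m2: "h \<in> Mor C" and r: "is_iso C r" "is_iso C r'" "Dom C r = Dom C g" "Cod C r = Dom C h"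
    "Dom C r' = Cod C g" "Cod C r' = Cod C h" "Comp C r' g = Comp C h r"
    using assms unfolding mor_sim_def by blast
  have sm: "s \<in> Mor C" "s' \<in> Mor C" "r \<in> Mor C" "r' \<in> Mor C" using s r iso_mor by auto
  have "Comp C (Comp C r' s') f = Comp C r' (Comp C s' f)" using assoc[of f s' r'] sm m s r by simp
  also have "\<dots> = Comp C r' (Comp C g s)" using s by simp
  also have "\<dots> = Comp C (Comp C r' g) s" using assoc[of s g r'] sm m s r by simp
  also have "\<dots> = Comp C (Comp C h r) s" using r by simp
  also have "\<dots> = Comp C h (Comp C r s)" using assoc[of s r h] sm m m2 s r by simp
  finally have eq: "Comp C (Comp C r' s') f = Comp C h (Comp C r s)" .
  show ?thesis unfolding mor_sim_def
    by (rule conjI, fact, rule conjI, fact, rule exI[of _ "Comp C r s"], rule exI[of _ "Comp C r' s'"])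
      (use s r sm eq comp_iso in auto)
qed

lemma ms_right: assumes "a \<in> Mor C" "is_iso C u" "Cod C u = Dom C a" shows "mor_sim C a (Comp C a u)"
proof -
  obtain t where t: "t \<in> Mor C" "is_iso C t" "Dom C t = Cod C u" "Cod C t = Dom C u"
    "Comp C t u = Ident C (Dom C u)" "Comp C u t = Ident C (Cod C u)" using iso_invE[OF assms(2)] by blast
  have um: "u \<in> Mor C" using assms iso_mor by auto
  have eq: "Comp C (Comp C a u) t = a" using iso_cancel_r[OF assms(2) t(1)] t assms by simp
  show ?thesis unfolding mor_sim_def
    by (rule conjI, fact, rule conjI, use assms um in simp, rule exI[of _ t], rule exI[of _ "Ident C (Cod C a)"])
      (use assms t um eq id_iso cod_ob in auto)
qed

lemma ms_left: assumes "b \<in> Mor C" "is_iso C u" "Dom C u = Cod C b" shows "mor_sim C b (Comp C u b)"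
proof -
  have um: "u \<in> Mor C" using assms iso_mor by auto
  show ?thesis unfolding mor_sim_def
    by (rule conjI, fact, rule conjI, use assms um in simp, rule exI[of _ "Ident C (Dom C b)"], rule exI[of _ u])
      (use assms um id_iso dom_ob in auto)
qed

lemma iso_sim_id: assumes "is_iso C a" shows "mor_sim C a (Ident C (Dom C a))"
proof -
  obtain t where t: "t \<in> Mor C" "is_iso C t" "Dom C t = Cod C a" "Cod C t = Dom C a"
    "Comp C t a = Ident C (Dom C a)" "Comp C a t = Ident C (Cod C a)" using iso_invE[OF assms] by blast
  have am: "a \<in> Mor C" using assms iso_mor by auto
  show ?thesis unfolding mor_sim_def
    by (rule conjI, fact, rule conjI, use am dom_ob in simp, rule exI[of _ "Ident C (Dom C a)"], rule exI[of _ t])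
      (use am t id_iso dom_ob in auto)
qed

lemma sim_id_iso: assumes "mor_sim C a (Ident C X)" "X \<in> Ob C" shows "is_iso C a"
proof -
  obtain s s' where m: "a \<in> Mor C" and s: "is_iso C s" "is_iso C s'" "Dom C s = Dom C a" "Cod C s = X"
    "Dom C s' = Cod C a" "Cod C s' = X" "Comp C s' a = Comp C (Ident C X) s"
    using assms unfolding mor_sim_def by auto
  obtain t' where t': "t' \<in> Mor C" "is_iso C t'" "Dom C t' = Cod C s'" "Cod C t' = Dom C s'"
    "Comp C t' s' = Ident C (Dom C s')" "Comp C s' t' = Ident C (Cod C s')" using iso_invE[OF s(2)] by blast
  have sm: "s \<in> Mor C" using s iso_mor by auto
  have e: "Comp C t' (Comp C s' a) = a" by (rule iso_cancel_l[OF s(2) t'(1)]) (use t' m s in auto)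
  have "Comp C s' a = s" using s sm by simp
  with e have "a = Comp C t' s" by simp
  then show ?thesis using comp_iso[OF s(1) t'(2)] s t' by simp
qed

lemma sim_id_obj: assumes "mor_sim C (Ident C X) (Ident C Y)" "X \<in> Ob C" "Y \<in> Ob C"
  shows "\<exists>r. is_iso C r \<and> Dom C r = X \<and> Cod C r = Y"
  using assms unfolding mor_sim_def by auto

end

definition minv :: "('o,'m) category \<Rightarrow> 'm \<Rightarrow> 'm" where
  "minv C s = (SOME t. t \<in> Mor C \<and> Dom C t = Cod C s \<and> Cod C t = Dom C s \<and>
      Comp C t s = Ident C (Dom C s) \<and> Comp C s t = Ident C (Cod C s))"

definition Hom_iso :: "('o,'m) category \<Rightarrow> 'o \<Rightarrow> 'o \<Rightarrow> 'm set" where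
  "Hom_iso C X Y = {s. is_iso C s \<and> Dom C s = X \<and> Cod C s = Y}"

definition NN :: "('o,'m) category \<Rightarrow> 'o \<Rightarrow> nat" where
  "NN C X = card (Iso C X) * card (Aut C X)"

context cat begin

lemma minv: assumes "is_iso C s"
  shows "minv C s \<in> Mor C" "is_iso C (minv C s)" "Dom C (minv C s) = Cod C s" "Cod C (minv C s) = Dom C s"
    "Comp C (minv C s) s = Ident C (Dom C s)" "Comp C s (minv C s) = Ident C (Cod C s)"
proof -
  have ex: "\<exists>t. t \<in> Mor C \<and> Dom C t = Cod C s \<and> Cod C t = Dom C s \<and>
      Comp C t s = Ident C (Dom C s) \<and> Comp C s t = Ident C (Cod C s)"
    using assms unfolding is_iso_def by blast
  note P = someI_ex[OF ex, folded minv_def]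
  show "minv C s \<in> Mor C" "Dom C (minv C s) = Cod C s" "Cod C (minv C s) = Dom C s"
    "Comp C (minv C s) s = Ident C (Dom C s)" "Comp C s (minv C s) = Ident C (Cod C s)"
    using P by auto
  show "is_iso C (minv C s)" unfolding is_iso_def using P assms iso_mor by auto
qed

lemma minv_cancel_l: "is_iso C s \<Longrightarrow> f \<in> Mor C \<Longrightarrow> Cod C f = Dom C s \<Longrightarrow> Comp C (minv C s) (Comp C s f) = f"
  by (rule iso_cancel_l) (auto simp: minv)
lemma minv_cancel_r: "is_iso C s \<Longrightarrow> f \<in> Mor C \<Longrightarrow> Dom C f = Cod C s \<Longrightarrow> Comp C (Comp C f s) (minv C s) = f"
  by (rule iso_cancel_r) (auto simp: minv)
lemma minv_cancel_l2: "is_iso C s \<Longrightarrow> f \<in> Mor C \<Longrightarrow> Cod C f = Cod C s \<Longrightarrow> Comp C s (Comp C (minv C s) f) = f"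
  using iso_cancel_l[of "minv C s" s f] by (auto simp: minv iso_mor)
lemma minv_cancel_r2: "is_iso C s \<Longrightarrow> f \<in> Mor C \<Longrightarrow> Dom C f = Dom C s \<Longrightarrow> Comp C (Comp C f (minv C s)) s = f"
  using iso_cancel_r[of "minv C s" s f] by (auto simp: minv iso_mor)

lemma hom_iso_card_l: assumes r: "is_iso C r" "Dom C r = X" "Cod C r = Y"
  shows "card (Hom_iso C X Y) = card (Aut C X)"
proof -
  have rm: "r \<in> Mor C" using r iso_mor by auto
  have "bij_betw (\<lambda>a. Comp C r a) (Aut C X) (Hom_iso C X Y)"
  proof (rule bij_betw_byWitness[where f'="\<lambda>s. Comp C (minv C r) s"])
    show "\<forall>a\<in>Aut C X. Comp C (minv C r) (Comp C r a) = a"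
      using r by (auto simp: Aut_def minv_cancel_l iso_mor)
    show "\<forall>a\<in>Hom_iso C X Y. Comp C r (Comp C (minv C r) a) = a"
      using r by (auto simp: Hom_iso_def minv_cancel_l2 iso_mor)
    show "(\<lambda>a. Comp C r a) ` Aut C X \<subseteq> Hom_iso C X Y"
      using r rm by (auto simp: Aut_def Hom_iso_def iso_mor comp_iso)
    show "(\<lambda>a. Comp C (minv C r) a) ` Hom_iso C X Y \<subseteq> Aut C X"
      using r rm by (auto simp: Aut_def Hom_iso_def iso_mor comp_iso minv)
  qed
  then show ?thesis by (simp add: bij_betw_same_card)
qed

lemma hom_iso_card_r: assumes r: "is_iso C r" "Dom C r = X" "Cod C r = Y"
  shows "card (Hom_iso C X Y) = card (Aut C Y)"
proof -
  have rm: "r \<in> Mor C" using r iso_mor by auto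
  have "bij_betw (\<lambda>a. Comp C a r) (Aut C Y) (Hom_iso C X Y)"
  proof (rule bij_betw_byWitness[where f'="\<lambda>s. Comp C s (minv C r)"])
    show "\<forall>a\<in>Aut C Y. Comp C (Comp C a r) (minv C r) = a"
      using r by (auto simp: Aut_def minv_cancel_r iso_mor)
    show "\<forall>a\<in>Hom_iso C X Y. Comp C (Comp C a (minv C r)) r = a"
      using r by (auto simp: Hom_iso_def minv_cancel_r2 iso_mor)
    show "(\<lambda>a. Comp C a r) ` Aut C Y \<subseteq> Hom_iso C X Y"
      using r rm by (auto simp: Aut_def Hom_iso_def iso_mor comp_iso)
    show "(\<lambda>a. Comp C a (minv C r)) ` Hom_iso C X Y \<subseteq> Aut C Y"
      using r rm by (auto simp: Aut_def Hom_iso_def iso_mor comp_iso minv)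
  qed
  then show ?thesis by (simp add: bij_betw_same_card)
qed

lemma Iso_eq: assumes r: "is_iso C r" "Dom C r = X" "Cod C r = Y" shows "Iso C X = Iso C Y"
proof
  show "Iso C X \<subseteq> Iso C Y"
  proof
    fix Z assume "Z \<in> Iso C X"
    then obtain s where s: "Z \<in> Ob C" "is_iso C s" "Dom C s = X" "Cod C s = Z" unfolding Iso_def by auto
    have "is_iso C (Comp C s (minv C r))" using s r by (auto intro!: comp_iso simp: minv)
    moreover have "Dom C (Comp C s (minv C r)) = Y" "Cod C (Comp C s (minv C r)) = Z"
      using s r by (auto simp: minv iso_mor)
    ultimately show "Z \<in> Iso C Y" unfolding Iso_def using s by auto
  qed
next
  show "Iso C Y \<subseteq> Iso C X"
  proof
    fix Z assume "Z \<in> Iso C Y"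
    then obtain s where s: "Z \<in> Ob C" "is_iso C s" "Dom C s = Y" "Cod C s = Z" unfolding Iso_def by auto
    have "is_iso C (Comp C s r)" using s r by (auto intro!: comp_iso simp: minv)
    moreover have "Dom C (Comp C s r) = X" "Cod C (Comp C s r) = Z"
      using s r by (auto simp: minv iso_mor)
    ultimately show "Z \<in> Iso C X" unfolding Iso_def using s by auto
  qed
qed

lemma NN_eq: assumes r: "is_iso C r" "Dom C r = X" "Cod C r = Y" shows "NN C X = NN C Y"
  unfolding NN_def using Iso_eq[OF r] hom_iso_card_l[OF r] hom_iso_card_r[OF r] by simp

lemma eps_val_sim: assumes "mor_sim C f g" shows "eps_val C f = eps_val C g"
proof (cases "\<exists>X\<in>Ob C. mor_sim C f (Ident C X)")
  case True
  then have T2: "\<exists>X\<in>Ob C. mor_sim C g (Ident C X)" using ms_trans ms_sym assms by blast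
  define X where "X = (SOME X. X \<in> Ob C \<and> mor_sim C f (Ident C X))"
  define Y where "Y = (SOME X. X \<in> Ob C \<and> mor_sim C g (Ident C X))"
  have X: "X \<in> Ob C \<and> mor_sim C f (Ident C X)" unfolding X_def by (rule someI_ex) (use True in blast)
  have Y: "Y \<in> Ob C \<and> mor_sim C g (Ident C Y)" unfolding Y_def by (rule someI_ex) (use T2 in blast)
  have "mor_sim C (Ident C X) (Ident C Y)" using X Y assms ms_sym ms_trans by blast
  then obtain r where "is_iso C r" "Dom C r = X" "Cod C r = Y" using sim_id_obj X Y by blast
  then have "NN C X = NN C Y" by (rule NN_eq)
  then show ?thesis unfolding eps_val_def using True T2 X_def Y_def by (simp add: NN_def Let_def del: of_nat_mult)
next
  case False
  then have F2: "\<not> (\<exists>X\<in>Ob C. mor_sim C g (Ident C X))" using ms_trans assms by blast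
  show ?thesis unfolding eps_val_def using False F2 by simp
qed

lemma eps_val_iso: assumes "is_iso C a"
  shows "eps_val C a = (unit_inv (of_nat (NN C (Dom C a))) :: 'r::comm_ring_1)"
proof -
  have am: "a \<in> Mor C" using assms iso_mor by auto
  have "mor_sim C a (Ident C (Dom C a))" by (rule iso_sim_id[OF assms])
  then have "eps_val C a = (eps_val C (Ident C (Dom C a)) :: 'r)" by (rule eps_val_sim)
  moreover
  have T: "\<exists>X\<in>Ob C. mor_sim C (Ident C (Dom C a)) (Ident C X)"
    by (intro bexI[of _ "Dom C a"] ms_refl) (auto simp: am dom_ob)
  define X where "X = (SOME X. X \<in> Ob C \<and> mor_sim C (Ident C (Dom C a)) (Ident C X))"
  have X: "X \<in> Ob C \<and> mor_sim C (Ident C (Dom C a)) (Ident C X)" unfolding X_def by (rule someI_ex) (use T in blast)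
  then obtain r where "is_iso C r" "Dom C r = Dom C a" "Cod C r = X" using sim_id_obj am dom_ob by blast
  then have "NN C (Dom C a) = NN C X" by (rule NN_eq)
  then have "eps_val C (Ident C (Dom C a)) = (unit_inv (of_nat (NN C (Dom C a))) :: 'r)"
    unfolding eps_val_def using T X_def by (simp add: NN_def Let_def del: of_nat_mult)
  ultimately show ?thesis by simp
qed

lemma eps_val_iso2: assumes "is_iso C a"
  shows "eps_val C a = (unit_inv (of_nat (NN C (Cod C a))) :: 'r::comm_ring_1)"
  using eps_val_iso[OF assms] NN_eq[OF assms refl refl] by simp

lemma eps_val_noniso: assumes "\<not> is_iso C a" shows "eps_val C a = 0"
  unfolding eps_val_def using assms sim_id_iso by auto

end

lemma when_eq_if: "(x when P) = (if P then x else 0)" by (simp add: when_def)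

lemma sum_when_eq: "finite A \<Longrightarrow> (\<Sum>y\<in>A. (f y when y = a)) = (f a when a \<in> A)"
  by (simp add: when_def sum.delta')

lemma lookup_cmul: "Poly_Mapping.lookup (Poly_Mapping.map ((*) c) x) k = c * Poly_Mapping.lookup x (k::'a) * (1::'r::comm_ring_1)"
  by (simp add: map.rep_eq when_def)

lemma cmul_add: "Poly_Mapping.map ((*) c) (x + y) = Poly_Mapping.map ((*) c) x + Poly_Mapping.map ((*) (c::'r::comm_ring_1)) y"
  by (rule poly_mapping_eqI) (simp add: lookup_cmul lookup_add algebra_simps)

lemma cmul_cmul: "Poly_Mapping.map ((*) c) (Poly_Mapping.map ((*) d) x) = Poly_Mapping.map ((*) (c * d)) (x::'a \<Rightarrow>\<^sub>0 'r::comm_ring_1)"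
  by (rule poly_mapping_eqI) (simp add: lookup_cmul algebra_simps)

lemma cmul_one: "Poly_Mapping.map ((*) 1) (x::'a \<Rightarrow>\<^sub>0 'r::comm_ring_1) = x"
  by (rule poly_mapping_eqI) (simp add: lookup_cmul)

lemma cmul_zero: "Poly_Mapping.map ((*) c) (0::'a \<Rightarrow>\<^sub>0 'r::comm_ring_1) = 0"
  by (rule poly_mapping_eqI) (simp add: lookup_cmul)

lemma lspan_add: "x \<in> lspan S \<Longrightarrow> y \<in> lspan S \<Longrightarrow> x + y \<in> lspan S"
proof (induction x rule: lspan.induct)
  case lspan_zero then show ?case by simp
next
  case (lspan_step x y' c)
  then show ?case using lspan.lspan_step[of x S "y' + y" c] by (simp add: add.assoc)
qed

lemma lspan_cmul: "x \<in> lspan S \<Longrightarrow> Poly_Mapping.map ((*) c) x \<in> lspan S"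
proof (induction x rule: lspan.induct)
  case lspan_zero then show ?case by (simp add: cmul_zero lspan.lspan_zero)
next
  case (lspan_step x y d)
  then show ?case using lspan.lspan_step[of x S "Poly_Mapping.map ((*) c) y" "c * d"]
    by (simp add: cmul_add cmul_cmul)
qed

lemma lspan_gen: assumes "x \<in> S" shows "x \<in> lspan S"
proof -
  have "Poly_Mapping.map ((*) 1) x + 0 \<in> lspan S" by (rule lspan.lspan_step[OF assms lspan.lspan_zero])
  then show ?thesis by (simp add: cmul_one)
qed

lemma cmul_neg: "Poly_Mapping.map ((*) (-1)) (x::'a \<Rightarrow>\<^sub>0 'r::comm_ring_1) = - x"
  by (rule poly_mapping_eqI) (simp add: lookup_cmul)

lemma lspan_diff: "x \<in> lspan S \<Longrightarrow> y \<in> lspan S \<Longrightarrow> x - y \<in> lspan S"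
  using lspan_add[of x S "- y"] lspan_cmul[of y S "-1"] by (simp add: cmul_neg)

lemma lspan_sum: "finite A \<Longrightarrow> (\<And>i. i \<in> A \<Longrightarrow> f i \<in> lspan S) \<Longrightarrow> sum f A \<in> lspan S"
  by (induction A rule: finite_induct) (auto intro: lspan_add lspan.lspan_zero)

lemma sub_sum_add: assumes "x \<in> sub_sum U V" "y \<in> sub_sum U V" "U = lspan A" "V = lspan B" shows "x + y \<in> sub_sum U V"
proof -
  obtain u v where 1: "x = u + v" "u \<in> U" "v \<in> V" using assms(1) unfolding sub_sum_def by auto
  obtain u' v' where 2: "y = u' + v'" "u' \<in> U" "v' \<in> V" using assms(2) unfolding sub_sum_def by auto
  have "x + y = (u + u') + (v + v')" using 1 2 by (simp add: algebra_simps)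
  moreover have "u + u' \<in> U" "v + v' \<in> V" using 1 2 assms(3,4) lspan_add by auto
  ultimately show ?thesis unfolding sub_sum_def by blast
qed

lemma sub_sum_cmul: "x \<in> sub_sum U V \<Longrightarrow> U = lspan A \<Longrightarrow> V = lspan B \<Longrightarrow> Poly_Mapping.map ((*) c) x \<in> sub_sum U V"
  unfolding sub_sum_def
  apply clarify
  subgoal for u v
    by (rule exI[of _ "Poly_Mapping.map ((*) c) u"], rule exI[of _ "Poly_Mapping.map ((*) c) v"]) (auto simp: cmul_add intro: lspan_cmul)
  done

lemma sub_sum_zero: "U = lspan A \<Longrightarrow> V = lspan B \<Longrightarrow> 0 \<in> sub_sum U V"
  unfolding sub_sum_def by (auto intro!: exI[of _ 0] lspan.lspan_zero)

lemma sub_sum_sum: "finite I \<Longrightarrow> (\<And>i. i \<in> I \<Longrightarrow> f i \<in> sub_sum U V) \<Longrightarrow> U = lspan A \<Longrightarrow> V = lspan B \<Longrightarrow> sum f I \<in> sub_sum U V"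
  by (induction I rule: finite_induct) (auto intro: sub_sum_add sub_sum_zero)

lemma lookup_tens: "Poly_Mapping.lookup (tens u v) (a, b) = Poly_Mapping.lookup u a * Poly_Mapping.lookup v b"
proof -
  have "Poly_Mapping.lookup (tens u v) (a, b) = (\<Sum>a'\<in>Poly_Mapping.keys u. \<Sum>b'\<in>Poly_Mapping.keys v. (Poly_Mapping.lookup u a' * Poly_Mapping.lookup v b' when a' = a) when b' = b)"
    unfolding tens_def lookup_sum lookup_single by (intro sum.cong refl) (auto simp: when_def)
  also have "\<dots> = (\<Sum>a'\<in>Poly_Mapping.keys u. (Poly_Mapping.lookup u a' * Poly_Mapping.lookup v b when a' = a) when b \<in> Poly_Mapping.keys v)"
    by (simp add: sum_when_eq)
  also have "\<dots> = Poly_Mapping.lookup u a * Poly_Mapping.lookup v b"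
    by (cases "Poly_Mapping.lookup v b = 0") (auto simp: when_def sum.delta' in_keys_iff)
  finally show ?thesis .
qed


context cat begin

lemma mem_decomps: "(a, b) \<in> decomps C p \<longleftrightarrow> a \<in> Mor C \<and> b \<in> Mor C \<and> Cod C a = Dom C b \<and> Comp C b a = p"
  unfolding decomps_def by auto

lemma decomps_props: assumes "(a, b) \<in> decomps C f"
  shows "a \<in> Mor C" "b \<in> Mor C" "Cod C a = Dom C b" "Comp C b a = f" "Dom C a = Dom C f" "Cod C b = Cod C f"
proof -
  show 1: "a \<in> Mor C" "b \<in> Mor C" "Cod C a = Dom C b" "Comp C b a = f" using assms by (auto simp: mem_decomps)
  then show "Dom C a = Dom C f" "Cod C b = Cod C f" using dom_comp[of a b] cod_comp[of a b] by auto
qed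

lemma minv_minv: assumes "is_iso C s" shows "minv C (minv C s) = s"
proof -
  let ?u = "minv C s" let ?t = "minv C ?u"
  have u: "is_iso C ?u" using minv[OF assms] by auto
  have sm: "s \<in> Mor C" using assms iso_mor by auto
  have "?t = Comp C ?t (Comp C ?u s)" using minv[OF u] minv[OF assms] sm dom_ob by simp
  also have "\<dots> = Comp C (Comp C ?t ?u) s" using minv[OF u] minv[OF assms] sm assoc[of s ?u ?t] by simp
  also have "\<dots> = s" using minv[OF u] minv[OF assms] sm by simp
  finally show ?thesis by simp
qed

lemma sim_wit_sym: assumes "f \<in> Mor C" "g \<in> Mor C" "is_iso C s" "is_iso C s'" "Dom C s = Dom C f" "Cod C s = Dom C g"
    "Dom C s' = Cod C f" "Cod C s' = Cod C g" "Comp C s' f = Comp C g s"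
  shows "Comp C (minv C s') g = Comp C f (minv C s)"
proof -
  note m = minv[OF assms(3)] minv[OF assms(4)]
  have sm: "s \<in> Mor C" "s' \<in> Mor C" using assms iso_mor by auto
  have "Comp C (minv C s') g = Comp C (minv C s') (Comp C (Comp C g s) (minv C s))"
    using minv_cancel_r[OF assms(3), of g] assms by simp
  also have "\<dots> = Comp C (minv C s') (Comp C (Comp C s' f) (minv C s))" using assms by simp
  also have "\<dots> = Comp C (minv C s') (Comp C s' (Comp C f (minv C s)))"
    using assoc[of "minv C s" f s'] m sm assms by simp
  also have "\<dots> = Comp C f (minv C s)" using minv_cancel_l[OF assms(4)] m sm assms by simp
  finally show ?thesis .
qed

lemma decomp_transport: assumes "f \<in> Mor C" "g \<in> Mor C" "is_iso C s" "is_iso C s'" "Dom C s = Dom C f" "Cod C s = Dom C g"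
    "Dom C s' = Cod C f" "Cod C s' = Cod C g" "Comp C s' f = Comp C g s" and d: "(a, b) \<in> decomps C f"
  shows "(Comp C a (minv C s), Comp C s' b) \<in> decomps C g"
proof -
  note m = minv[OF assms(3)]
  have sm: "s \<in> Mor C" "s' \<in> Mor C" using assms iso_mor by auto
  have ab: "a \<in> Mor C" "b \<in> Mor C" "Cod C a = Dom C b" "Comp C b a = f" using d unfolding decomps_def by auto
  have da: "Dom C a = Dom C f" and cb: "Cod C b = Cod C f" using ab assms(1) by (metis dom_comp cod_comp)+
  have "Comp C (Comp C s' b) (Comp C a (minv C s)) = Comp C s' (Comp C b (Comp C a (minv C s)))"
    using assoc[of "Comp C a (minv C s)" b s'] m sm ab da cb assms by simp
  also have "\<dots> = Comp C s' (Comp C (Comp C b a) (minv C s))"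
    using assoc[of "minv C s" a b] m sm ab da cb assms by simp
  also have "\<dots> = Comp C (Comp C s' f) (minv C s)"
    using assoc[of "minv C s" f s'] m sm ab da cb assms by simp
  also have "\<dots> = g" using assms minv_cancel_r[OF assms(3), of g] by simp
  finally show ?thesis unfolding decomps_def using m sm ab da cb assms by auto
qed

lemma decomp_bij: assumes "f \<in> Mor C" "g \<in> Mor C" "is_iso C s" "is_iso C s'" "Dom C s = Dom C f" "Cod C s = Dom C g"
    "Dom C s' = Cod C f" "Cod C s' = Cod C g" "Comp C s' f = Comp C g s"
  shows "bij_betw (\<lambda>(a, b). (Comp C a (minv C s), Comp C s' b)) (decomps C f) (decomps C g)"
proof (rule bij_betw_byWitness[where f'="\<lambda>(a, b). (Comp C a s, Comp C (minv C s') b)"])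
  note m = minv[OF assms(3)] minv[OF assms(4)]
  have sm: "s \<in> Mor C" "s' \<in> Mor C" using assms iso_mor by auto
  have D: "\<And>a b. (a, b) \<in> decomps C f \<Longrightarrow> a \<in> Mor C \<and> b \<in> Mor C \<and> Dom C a = Dom C f \<and> Cod C b = Cod C f"
    using decomps_props by blast
  have D2: "\<And>a b. (a, b) \<in> decomps C g \<Longrightarrow> a \<in> Mor C \<and> b \<in> Mor C \<and> Dom C a = Dom C g \<and> Cod C b = Cod C g"
    using decomps_props by blast
  show "\<forall>x\<in>decomps C f. (\<lambda>(a, b). (Comp C a s, Comp C (minv C s') b)) ((\<lambda>(a, b). (Comp C a (minv C s), Comp C s' b)) x) = x"
    using D assms by (auto simp: minv_cancel_r2 minv_cancel_l)
  show "\<forall>x\<in>decomps C g. (\<lambda>(a, b). (Comp C a (minv C s), Comp C s' b)) ((\<lambda>(a, b). (Comp C a s, Comp C (minv C s') b)) x) = x"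
    using D2 assms by (auto simp: minv_cancel_r minv_cancel_l2)
  show "(\<lambda>(a, b). (Comp C a (minv C s), Comp C s' b)) ` decomps C f \<subseteq> decomps C g"
    using decomp_transport[OF assms] by auto
  have w: "Comp C (minv C s') g = Comp C f (minv C s)" by (rule sim_wit_sym[OF assms])
  show "(\<lambda>(a, b). (Comp C a s, Comp C (minv C s') b)) ` decomps C g \<subseteq> decomps C f"
    using decomp_transport[OF assms(2,1) m(2) m(8) _ _ _ _ w] m assms minv_minv[OF assms(3)] by auto
qed

end

locale dcat = cat + assumes dfin: "decomposition_finite C"
begin

lemma finite_decomps: "finite (decomps C p)"
proof (cases "p \<in> Mor C")
  case True then show ?thesis using dfin unfolding decomposition_finite_def by auto
next
  case False
  then have "decomps C p = {}" unfolding decomps_def by auto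
  then show ?thesis by simp
qed


lemma lookup_coprod: "Poly_Mapping.lookup (coprod C x) (a, b) =
   (if a \<in> Mor C \<and> b \<in> Mor C \<and> Cod C a = Dom C b then Poly_Mapping.lookup x (Comp C b a) else 0)"
proof -
  have "Poly_Mapping.lookup (coprod C x) (a, b) = (\<Sum>p\<in>Poly_Mapping.keys x. \<Sum>d\<in>decomps C p. (Poly_Mapping.lookup x p when d = (a, b)))"
    unfolding coprod_def lookup_sum lookup_single by (auto simp: when_def intro!: sum.cong)
  also have "\<dots> = (\<Sum>p\<in>Poly_Mapping.keys x. (Poly_Mapping.lookup x p when (a, b) \<in> decomps C p))"
    by (simp add: sum_when_eq finite_decomps)
  also have "\<dots> = (\<Sum>p\<in>Poly_Mapping.keys x. ((Poly_Mapping.lookup x p when p = Comp C b a) when a \<in> Mor C \<and> b \<in> Mor C \<and> Cod C a = Dom C b))"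
    by (intro sum.cong refl) (auto simp: when_def mem_decomps)
  also have "\<dots> = (if a \<in> Mor C \<and> b \<in> Mor C \<and> Cod C a = Dom C b then Poly_Mapping.lookup x (Comp C b a) else 0)"
    by (auto simp: when_def sum.delta' in_keys_iff)
  finally show ?thesis .
qed

end

context dcat begin

lemma coprod_add: "coprod C (x + y) = coprod C x + coprod C (y :: _ \<Rightarrow>\<^sub>0 'r::comm_ring_1)"
  by (rule poly_mapping_eqI) (auto simp: lookup_coprod lookup_add)

lemma coprod_diff: "coprod C (x - y) = coprod C x - coprod C (y :: _ \<Rightarrow>\<^sub>0 'r::comm_ring_1)"
  by (rule poly_mapping_eqI) (auto simp: lookup_coprod lookup_minus)

lemma coprod_zero: "coprod C (0 :: _ \<Rightarrow>\<^sub>0 'r::comm_ring_1) = 0"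
  by (rule poly_mapping_eqI) (auto simp: lookup_coprod)

lemma coprod_cmul: "coprod C (Poly_Mapping.map ((*) c) x) = Poly_Mapping.map ((*) c) (coprod C (x :: _ \<Rightarrow>\<^sub>0 'r::comm_ring_1))"
  by (rule poly_mapping_eqI) (auto simp: lookup_coprod lookup_cmul)

lemma coprod_single_lookup: "Poly_Mapping.lookup (coprod C (Poly_Mapping.single p (c::'r::comm_ring_1))) (a, b) = Poly_Mapping.lookup (\<Sum>d\<in>decomps C p. Poly_Mapping.single d c) (a, b)"
proof -
  have "Poly_Mapping.lookup (\<Sum>d\<in>decomps C p. Poly_Mapping.single d c) (a, b) = (\<Sum>d\<in>decomps C p. (c when d = (a, b)))"
    unfolding lookup_sum lookup_single by (auto simp: when_def intro!: sum.cong)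
  also have "\<dots> = (c when (a, b) \<in> decomps C p)" by (simp add: sum_when_eq finite_decomps)
  finally show ?thesis
    by (auto simp: lookup_coprod mem_decomps lookup_single when_def)
qed

lemma coprod_single: "coprod C (Poly_Mapping.single p (c::'r::comm_ring_1)) = (\<Sum>d\<in>decomps C p. Poly_Mapping.single d c)"
  by (rule poly_mapping_eqI) (metis coprod_single_lookup surj_pair)

lemma gen_Csim: "mor_sim C f g \<Longrightarrow> Poly_Mapping.single f c - Poly_Mapping.single g (c::'r::comm_ring_1) \<in> Csim C"
proof -
  assume "mor_sim C f g"
  then have "Poly_Mapping.single f 1 - Poly_Mapping.single g 1 \<in> (sim_gens C :: (_ \<Rightarrow>\<^sub>0 'r) set)"
    unfolding sim_gens_def by blast
  from lspan_cmul[OF lspan_gen[OF this], of c]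
  have "Poly_Mapping.map ((*) c) (Poly_Mapping.single f 1 - Poly_Mapping.single g 1) \<in> Csim C" unfolding Csim_def .
  moreover have "Poly_Mapping.map ((*) c) (Poly_Mapping.single f 1 - Poly_Mapping.single g (1::'r)) = Poly_Mapping.single f c - Poly_Mapping.single g c"
    by (rule poly_mapping_eqI) (simp add: lookup_cmul lookup_minus lookup_single when_def)
  ultimately show ?thesis by simp
qed

lemma tens_in_sub: "u \<in> U \<Longrightarrow> v \<in> V \<Longrightarrow> tens u v \<in> tens_sub U V"
  unfolding tens_sub_def by (rule lspan_gen) blast

lemma single_free: "b \<in> Mor C \<Longrightarrow> Poly_Mapping.single b c \<in> free_mod C"
  unfolding free_mod_def by auto

lemma tens_split_lookup: "Poly_Mapping.lookup (Poly_Mapping.single (a, b) 1 - Poly_Mapping.single (a', b') (1::'r::comm_ring_1)) (x, y) =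
  Poly_Mapping.lookup (tens (Poly_Mapping.single a' 1) (Poly_Mapping.single b 1 - Poly_Mapping.single b' 1)
   + tens (Poly_Mapping.single a 1 - Poly_Mapping.single a' 1) (Poly_Mapping.single b (1::'r))) (x, y)"
  by (simp add: lookup_add lookup_minus lookup_tens lookup_single when_def algebra_simps)

lemma tens_split: "Poly_Mapping.single (a, b) 1 - Poly_Mapping.single (a', b') (1::'r::comm_ring_1) =
  tens (Poly_Mapping.single a' 1) (Poly_Mapping.single b 1 - Poly_Mapping.single b' 1)
   + tens (Poly_Mapping.single a 1 - Poly_Mapping.single a' 1) (Poly_Mapping.single b (1::'r))"
  by (rule poly_mapping_eqI) (metis tens_split_lookup surj_pair)

lemma term_in_T: assumes "mor_sim C a a'" "mor_sim C b b'"
  shows "Poly_Mapping.single (a, b) 1 - Poly_Mapping.single (a', b') (1::'r::comm_ring_1) \<in>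
     sub_sum (tens_sub (free_mod C) (Csim C)) (tens_sub (Csim C) (free_mod C))"
proof -
  have m: "a \<in> Mor C" "a' \<in> Mor C" "b \<in> Mor C" using assms unfolding mor_sim_def by auto
  have 1: "tens (Poly_Mapping.single a' 1) (Poly_Mapping.single b 1 - Poly_Mapping.single b' 1) \<in> tens_sub (free_mod C) (Csim C :: (_ \<Rightarrow>\<^sub>0 'r) set)"
    by (rule tens_in_sub) (auto intro: single_free m gen_Csim assms)
  have 2: "tens (Poly_Mapping.single a 1 - Poly_Mapping.single a' 1) (Poly_Mapping.single b 1) \<in> tens_sub (Csim C :: (_ \<Rightarrow>\<^sub>0 'r) set) (free_mod C)"
    by (rule tens_in_sub) (auto intro: single_free m gen_Csim assms)
  show ?thesis unfolding tens_split sub_sum_def using 1 2 by blast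
qed

lemma part1_gen: assumes "mor_sim C f g"
  shows "coprod C (Poly_Mapping.single f 1 - Poly_Mapping.single g (1::'r::comm_ring_1)) \<in>
     sub_sum (tens_sub (free_mod C) (Csim C)) (tens_sub (Csim C) (free_mod C))"
proof -
  obtain s s' where m: "f \<in> Mor C" "g \<in> Mor C" and s: "is_iso C s" "is_iso C s'" "Dom C s = Dom C f" "Cod C s = Dom C g"
    "Dom C s' = Cod C f" "Cod C s' = Cod C g" "Comp C s' f = Comp C g s"
    using assms unfolding mor_sim_def by blast
  define \<beta> where "\<beta> = (\<lambda>(a, b). (Comp C a (minv C s), Comp C s' b))"
  have bij: "bij_betw \<beta> (decomps C f) (decomps C g)" unfolding \<beta>_def by (rule decomp_bij[OF m s])
  have "coprod C (Poly_Mapping.single f 1 - Poly_Mapping.single g (1::'r)) =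
     (\<Sum>d\<in>decomps C f. Poly_Mapping.single d 1) - (\<Sum>d\<in>decomps C g. Poly_Mapping.single d 1)"
    by (simp add: coprod_diff coprod_single)
  also have "(\<Sum>d\<in>decomps C g. Poly_Mapping.single d (1::'r)) = (\<Sum>d\<in>decomps C f. Poly_Mapping.single (\<beta> d) 1)"
    using sum.reindex_bij_betw[OF bij, of "\<lambda>d. Poly_Mapping.single d (1::'r)"] by simp
  also have "(\<Sum>d\<in>decomps C f. Poly_Mapping.single d (1::'r)) - (\<Sum>d\<in>decomps C f. Poly_Mapping.single (\<beta> d) 1)
     = (\<Sum>d\<in>decomps C f. Poly_Mapping.single d 1 - Poly_Mapping.single (\<beta> d) 1)"
    by (simp add: sum_subtractf)
  also have "\<dots> \<in> sub_sum (tens_sub (free_mod C) (Csim C)) (tens_sub (Csim C) (free_mod C))"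
  proof (rule sub_sum_sum[OF finite_decomps _ tens_sub_def tens_sub_def])
    fix d assume d: "d \<in> decomps C f"
    obtain a b where ab: "d = (a, b)" by fastforce
    have D: "a \<in> Mor C" "b \<in> Mor C" "Dom C a = Dom C f" "Cod C b = Cod C f" using decomps_props d ab by auto
    have "mor_sim C a (Comp C a (minv C s))" by (rule ms_right) (use D s minv[OF s(1)] in auto)
    moreover have "mor_sim C b (Comp C s' b)" by (rule ms_left) (use D s in auto)
    ultimately show "Poly_Mapping.single d 1 - Poly_Mapping.single (\<beta> d) (1::'r) \<in> sub_sum (tens_sub (free_mod C) (Csim C)) (tens_sub (Csim C) (free_mod C))"
      unfolding ab \<beta>_def by (simp add: term_in_T)
  qed
  finally show ?thesis .
qed

lemma part1: "(x :: _ \<Rightarrow>\<^sub>0 'r::comm_ring_1) \<in> Csim C \<Longrightarrow>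
   coprod C x \<in> sub_sum (tens_sub (free_mod C) (Csim C)) (tens_sub (Csim C) (free_mod C))"
  unfolding Csim_def
proof (induction x rule: lspan.induct)
  case lspan_zero
  then show ?case using sub_sum_zero[OF tens_sub_def tens_sub_def] by (simp add: coprod_zero Csim_def)
next
  case (lspan_step x y c)
  then obtain f g where fg: "mor_sim C f g" "x = Poly_Mapping.single f 1 - Poly_Mapping.single g 1"
    unfolding sim_gens_def by blast
  have "coprod C (Poly_Mapping.map ((*) c) x + y) = Poly_Mapping.map ((*) c) (coprod C x) + coprod C y"
    by (simp add: coprod_add coprod_cmul)
  then show ?case using lspan_step.IH part1_gen[OF fg(1)] fg(2)
    by (auto simp: Csim_def intro!: sub_sum_add[OF _ _ tens_sub_def tens_sub_def] sub_sum_cmul[OF _ tens_sub_def tens_sub_def])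
qed

end

context dcat begin

lemma lookup_coprod_id: "Poly_Mapping.lookup (coprod_id C (y :: _ \<Rightarrow>\<^sub>0 'r::comm_ring_1)) (a, b, c) =
   (if a \<in> Mor C \<and> b \<in> Mor C \<and> Cod C a = Dom C b then Poly_Mapping.lookup y (Comp C b a, c) else 0)"
proof -
  have "Poly_Mapping.lookup (coprod_id C y) (a, b, c) =
     (\<Sum>p\<in>Poly_Mapping.keys y. \<Sum>d\<in>decomps C (fst p). ((Poly_Mapping.lookup y p when snd p = c) when d = (a, b)))"
    unfolding coprod_id_def lookup_sum lookup_single by (auto simp: when_def intro!: sum.cong)
  also have "\<dots> = (\<Sum>p\<in>Poly_Mapping.keys y. ((Poly_Mapping.lookup y p when snd p = c) when (a, b) \<in> decomps C (fst p)))"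
    by (simp add: sum_when_eq finite_decomps)
  also have "\<dots> = (\<Sum>p\<in>Poly_Mapping.keys y. ((Poly_Mapping.lookup y p when p = (Comp C b a, c)) when a \<in> Mor C \<and> b \<in> Mor C \<and> Cod C a = Dom C b))"
    by (rule sum.cong) (auto simp: when_def mem_decomps)
  also have "\<dots> = (if a \<in> Mor C \<and> b \<in> Mor C \<and> Cod C a = Dom C b then Poly_Mapping.lookup y (Comp C b a, c) else 0)"
    by (auto simp: when_def sum.delta' in_keys_iff)
  finally show ?thesis .
qed

lemma lookup_id_coprod: "Poly_Mapping.lookup (id_coprod C (y :: _ \<Rightarrow>\<^sub>0 'r::comm_ring_1)) (a, b, c) =
   (if b \<in> Mor C \<and> c \<in> Mor C \<and> Cod C b = Dom C c then Poly_Mapping.lookup y (a, Comp C c b) else 0)"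
proof -
  have "Poly_Mapping.lookup (id_coprod C y) (a, b, c) =
     (\<Sum>p\<in>Poly_Mapping.keys y. \<Sum>d\<in>decomps C (snd p). ((Poly_Mapping.lookup y p when fst p = a) when d = (b, c)))"
    unfolding id_coprod_def lookup_sum lookup_single by (auto simp: when_def intro!: sum.cong)
  also have "\<dots> = (\<Sum>p\<in>Poly_Mapping.keys y. ((Poly_Mapping.lookup y p when fst p = a) when (b, c) \<in> decomps C (snd p)))"
    by (simp add: sum_when_eq finite_decomps)
  also have "\<dots> = (\<Sum>p\<in>Poly_Mapping.keys y. ((Poly_Mapping.lookup y p when p = (a, Comp C c b)) when b \<in> Mor C \<and> c \<in> Mor C \<and> Cod C b = Dom C c))"
    by (rule sum.cong) (auto simp: when_def mem_decomps)
  also have "\<dots> = (if b \<in> Mor C \<and> c \<in> Mor C \<and> Cod C b = Dom C c then Poly_Mapping.lookup y (a, Comp C c b) else 0)"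
    by (auto simp: when_def sum.delta' in_keys_iff)
  finally show ?thesis .
qed

lemma coassoc_lookup: "Poly_Mapping.lookup (coprod_id C (coprod C (x :: _ \<Rightarrow>\<^sub>0 'r::comm_ring_1))) (a, b, c) =
    Poly_Mapping.lookup (id_coprod C (coprod C x)) (a, b, c)"
  by (auto simp: lookup_coprod_id lookup_id_coprod lookup_coprod assoc)

lemma coassoc: "coprod_id C (coprod C (x :: _ \<Rightarrow>\<^sub>0 'r::comm_ring_1)) = id_coprod C (coprod C x)"
  by (rule poly_mapping_eqI) (metis coassoc_lookup prod_cases3)

end

definition Out :: "('o,'m) category \<Rightarrow> 'o \<Rightarrow> 'm set" where
  "Out C X = {s. is_iso C s \<and> Dom C s = X}"
definition In :: "('o,'m) category \<Rightarrow> 'o \<Rightarrow> 'm set" where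
  "In C X = {s. is_iso C s \<and> Cod C s = X}"

lemma unit_inv_mult: "(r::'r::comm_ring_1) dvd 1 \<Longrightarrow> r * unit_inv r = 1"
proof -
  assume "r dvd 1"
  then obtain s where "1 = r * s" by (rule dvdE)
  then have "r * s = 1" by simp
  then show ?thesis unfolding unit_inv_def by (rule someI)
qed

context dcat begin

lemma finite_Out: assumes "X \<in> Ob C" shows "finite (Out C X)"
proof -
  have "Out C X \<subseteq> fst ` decomps C (Ident C X)"
  proof
    fix s assume "s \<in> Out C X"
    then have s: "is_iso C s" "Dom C s = X" unfolding Out_def by auto
    then have "(s, minv C s) \<in> decomps C (Ident C X)" using minv[OF s(1)] iso_mor[OF s(1)] by (auto simp: mem_decomps)
    then show "s \<in> fst ` decomps C (Ident C X)" by force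
  qed
  then show ?thesis using finite_decomps finite_subset by blast
qed

lemma card_Out: assumes X: "X \<in> Ob C" shows "card (Out C X) = NN C X"
proof -
  have fO: "finite (Out C X)" by (rule finite_Out[OF X])
  have eq: "Out C X = (\<Union>Y\<in>Iso C X. Hom_iso C X Y)"
    unfolding Out_def Iso_def Hom_iso_def using cod_ob iso_mor by fastforce
  have fI: "finite (Iso C X)"
  proof -
    have "Iso C X \<subseteq> Cod C ` Out C X" unfolding Iso_def Out_def by auto
    then show ?thesis using fO finite_subset by blast
  qed
  have fH: "\<forall>Y\<in>Iso C X. finite (Hom_iso C X Y)" using eq fO by (metis UN_upper finite_subset)
  have "card (Out C X) = (\<Sum>Y\<in>Iso C X. card (Hom_iso C X Y))"
    unfolding eq by (rule card_UN_disjoint[OF fI fH]) (auto simp: Hom_iso_def)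
  also have "\<dots> = (\<Sum>Y\<in>Iso C X. card (Aut C X))"
  proof (rule sum.cong[OF refl])
    fix Y assume "Y \<in> Iso C X"
    then obtain r where "is_iso C r" "Dom C r = X" "Cod C r = Y" unfolding Iso_def by auto
    then show "card (Hom_iso C X Y) = card (Aut C X)" by (rule hom_iso_card_l)
  qed
  also have "\<dots> = NN C X" by (simp add: NN_def)
  finally show ?thesis .
qed

lemma card_In: assumes X: "X \<in> Ob C" shows "card (In C X) = NN C X"
proof -
  have "bij_betw (minv C) (Out C X) (In C X)"
    by (rule bij_betw_byWitness[where f'="minv C"]) (auto simp: Out_def In_def minv minv_minv)
  then show ?thesis using card_Out[OF X] bij_betw_same_card[of "minv C" "Out C X" "In C X"] by simp
qed

lemma card_Diso: assumes p: "p \<in> Mor C"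
  shows "card {d \<in> decomps C p. is_iso C (fst d)} = NN C (Dom C p)"
proof -
  have "inj_on fst {d \<in> decomps C p. is_iso C (fst d)}"
  proof (rule inj_onI)
    fix d d' assume d: "d \<in> {d \<in> decomps C p. is_iso C (fst d)}" and d': "d' \<in> {d \<in> decomps C p. is_iso C (fst d)}"
      and eq: "fst d = fst d'"
    obtain a b where ab: "d = (a, b)" by fastforce
    obtain b' where ab': "d' = (a, b')" using eq ab by (metis fst_conv surj_pair)
    have A: "is_iso C a" using d ab by auto
    have B: "b \<in> Mor C" "Dom C b = Cod C a" "Comp C b a = p" using d ab decomps_props by auto
    have B': "b' \<in> Mor C" "Dom C b' = Cod C a" "Comp C b' a = p" using d' ab' decomps_props by auto
    have "b = Comp C (Comp C b a) (minv C a)" using minv_cancel_r[OF A B(1,2)] by simp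
    also have "\<dots> = Comp C (Comp C b' a) (minv C a)" using B B' by simp
    also have "\<dots> = b'" using minv_cancel_r[OF A B'(1,2)] by simp
    finally show "d = d'" using ab ab' by simp
  qed
  moreover have "fst ` {d \<in> decomps C p. is_iso C (fst d)} = Out C (Dom C p)"
  proof
    show "fst ` {d \<in> decomps C p. is_iso C (fst d)} \<subseteq> Out C (Dom C p)"
      using decomps_props unfolding Out_def by force
    show "Out C (Dom C p) \<subseteq> fst ` {d \<in> decomps C p. is_iso C (fst d)}"
    proof
      fix s assume "s \<in> Out C (Dom C p)"
      then have s: "is_iso C s" "Dom C s = Dom C p" unfolding Out_def by auto
      have "(s, Comp C p (minv C s)) \<in> decomps C p"
        using s minv[OF s(1)] iso_mor[OF s(1)] p minv_cancel_r2[OF s(1) p] by (auto simp: mem_decomps)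
      then show "s \<in> fst ` {d \<in> decomps C p. is_iso C (fst d)}" using s by force
    qed
  qed
  ultimately show ?thesis using card_Out[OF dom_ob[OF p]] card_image[of fst "{d \<in> decomps C p. is_iso C (fst d)}"] by simp
qed

lemma card_Diso2: assumes p: "p \<in> Mor C"
  shows "card {d \<in> decomps C p. is_iso C (snd d)} = NN C (Cod C p)"
proof -
  have "inj_on snd {d \<in> decomps C p. is_iso C (snd d)}"
  proof (rule inj_onI)
    fix d d' assume d: "d \<in> {d \<in> decomps C p. is_iso C (snd d)}" and d': "d' \<in> {d \<in> decomps C p. is_iso C (snd d)}"
      and eq: "snd d = snd d'"
    obtain a b where ab: "d = (a, b)" by fastforce
    obtain a' where ab': "d' = (a', b)" using eq ab by (metis snd_conv surj_pair)
    have A: "is_iso C b" using d ab by auto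
    have B: "a \<in> Mor C" "Cod C a = Dom C b" "Comp C b a = p" using d ab decomps_props by auto
    have B': "a' \<in> Mor C" "Cod C a' = Dom C b" "Comp C b a' = p" using d' ab' decomps_props by auto
    have "a = Comp C (minv C b) (Comp C b a)" using minv_cancel_l[OF A B(1,2)] by simp
    also have "\<dots> = Comp C (minv C b) (Comp C b a')" using B B' by simp
    also have "\<dots> = a'" using minv_cancel_l[OF A B'(1,2)] by simp
    finally show "d = d'" using ab ab' by simp
  qed
  moreover have "snd ` {d \<in> decomps C p. is_iso C (snd d)} = In C (Cod C p)"
  proof
    show "snd ` {d \<in> decomps C p. is_iso C (snd d)} \<subseteq> In C (Cod C p)"
      using decomps_props unfolding In_def by force
    show "In C (Cod C p) \<subseteq> snd ` {d \<in> decomps C p. is_iso C (snd d)}"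
    proof
      fix s assume "s \<in> In C (Cod C p)"
      then have s: "is_iso C s" "Cod C s = Cod C p" unfolding In_def by auto
      have "(Comp C (minv C s) p, s) \<in> decomps C p"
        using s minv[OF s(1)] iso_mor[OF s(1)] p minv_cancel_l2[OF s(1) p] by (auto simp: mem_decomps)
      then show "s \<in> snd ` {d \<in> decomps C p. is_iso C (snd d)}" using s by force
    qed
  qed
  ultimately show ?thesis using card_In[OF cod_ob[OF p]] card_image[of snd "{d \<in> decomps C p. is_iso C (snd d)}"] by simp
qed

end

lemma keys_cmul_sub: "Poly_Mapping.keys (Poly_Mapping.map ((*) c) (x :: _ \<Rightarrow>\<^sub>0 'r::comm_ring_1)) \<subseteq> Poly_Mapping.keys x"
  by (auto simp: in_keys_iff lookup_cmul)

lemma sum_single_const: "(\<Sum>i\<in>A. Poly_Mapping.single p (k::'r::comm_ring_1)) = Poly_Mapping.single p (of_nat (card A) * k)"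
  by (rule poly_mapping_eqI) (simp add: lookup_sum lookup_single when_def)

lemma poly_decomp: "(x :: _ \<Rightarrow>\<^sub>0 'r::comm_ring_1) = (\<Sum>k\<in>Poly_Mapping.keys x. Poly_Mapping.single k (Poly_Mapping.lookup x k))"
proof (rule poly_mapping_eqI)
  fix j
  have "Poly_Mapping.lookup (\<Sum>k\<in>Poly_Mapping.keys x. Poly_Mapping.single k (Poly_Mapping.lookup x k)) j
     = (\<Sum>k\<in>Poly_Mapping.keys x. (Poly_Mapping.lookup x k when k = j))"
    unfolding lookup_sum lookup_single by (auto simp: when_def intro!: sum.cong)
  also have "\<dots> = Poly_Mapping.lookup x j" by (simp add: sum_when_eq when_def in_keys_iff)
  finally show "Poly_Mapping.lookup x j = Poly_Mapping.lookup (\<Sum>k\<in>Poly_Mapping.keys x. Poly_Mapping.single k (Poly_Mapping.lookup x k)) j" by simp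
qed

context dcat begin

lemma eps_S: "finite S \<Longrightarrow> Poly_Mapping.keys x \<subseteq> S \<Longrightarrow> eps C (x :: _ \<Rightarrow>\<^sub>0 'r::comm_ring_1) = (\<Sum>f\<in>S. Poly_Mapping.lookup x f * eps_val C f)"
  unfolding eps_def by (rule sum.mono_neutral_left) (auto simp: in_keys_iff)

lemma eps_add: "eps C (x + y) = eps C x + eps C (y :: _ \<Rightarrow>\<^sub>0 'r::comm_ring_1)"
proof -
  let ?S = "Poly_Mapping.keys x \<union> Poly_Mapping.keys y"
  have "eps C (x + y) = (\<Sum>f\<in>?S. Poly_Mapping.lookup (x + y) f * eps_val C f)"
    by (rule eps_S) (auto simp: keys_add)
  also have "\<dots> = (\<Sum>f\<in>?S. Poly_Mapping.lookup x f * eps_val C f) + (\<Sum>f\<in>?S. Poly_Mapping.lookup y f * eps_val C f)"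
    by (simp add: lookup_add distrib_right sum.distrib)
  also have "\<dots> = eps C x + eps C y" by (simp add: eps_S[symmetric])
  finally show ?thesis .
qed

lemma eps_cmul: "eps C (Poly_Mapping.map ((*) c) x) = c * eps C (x :: _ \<Rightarrow>\<^sub>0 'r::comm_ring_1)"
proof -
  have "eps C (Poly_Mapping.map ((*) c) x) = (\<Sum>f\<in>Poly_Mapping.keys x. Poly_Mapping.lookup (Poly_Mapping.map ((*) c) x) f * eps_val C f)"
    by (rule eps_S) (auto simp: keys_cmul_sub)
  also have "\<dots> = c * eps C x" by (simp add: eps_def lookup_cmul sum_distrib_left mult.assoc)
  finally show ?thesis .
qed

lemma eps_gen: assumes "mor_sim C f g" shows "eps C (Poly_Mapping.single f 1 - Poly_Mapping.single g (1::'r::comm_ring_1)) = 0"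
proof -
  have "eps C (Poly_Mapping.single f 1 - Poly_Mapping.single g (1::'r)) =
     (\<Sum>h\<in>{f, g}. Poly_Mapping.lookup (Poly_Mapping.single f 1 - Poly_Mapping.single g (1::'r)) h * eps_val C h)"
    by (rule eps_S) (auto simp: in_keys_iff lookup_minus lookup_single when_def split: if_splits)
  also have "\<dots> = 0" using eps_val_sim[OF assms, where 'a='r]
    by (cases "f = g") (auto simp: lookup_minus lookup_single when_def)
  finally show ?thesis .
qed

lemma part3a: "(x :: _ \<Rightarrow>\<^sub>0 'r::comm_ring_1) \<in> Csim C \<Longrightarrow> eps C x = 0"
  unfolding Csim_def
proof (induction x rule: lspan.induct)
  case lspan_zero then show ?case by (simp add: eps_def)
next
  case (lspan_step x y c)
  then obtain f g where fg: "mor_sim C f g" "x = Poly_Mapping.single f 1 - Poly_Mapping.single g 1"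
    unfolding sim_gens_def by blast
  have "eps C x = (0::'r)" using fg eps_gen by simp
  then show ?case using lspan_step.IH by (simp add: eps_add eps_cmul)
qed

lemma eps_id_S: "finite S \<Longrightarrow> Poly_Mapping.keys y \<subseteq> S \<Longrightarrow>
   eps_id C (y :: _ \<Rightarrow>\<^sub>0 'r::comm_ring_1) = (\<Sum>p\<in>S. Poly_Mapping.single (snd p) (eps_val C (fst p) * Poly_Mapping.lookup y p))"
  unfolding eps_id_def by (rule sum.mono_neutral_left) (auto simp: in_keys_iff)

lemma id_eps_S: "finite S \<Longrightarrow> Poly_Mapping.keys y \<subseteq> S \<Longrightarrow>
   id_eps C (y :: _ \<Rightarrow>\<^sub>0 'r::comm_ring_1) = (\<Sum>p\<in>S. Poly_Mapping.single (fst p) (Poly_Mapping.lookup y p * eps_val C (snd p)))"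
  unfolding id_eps_def by (rule sum.mono_neutral_left) (auto simp: in_keys_iff)

lemma eps_id_add: "eps_id C (x + y) = eps_id C x + eps_id C (y :: _ \<Rightarrow>\<^sub>0 'r::comm_ring_1)"
proof -
  let ?S = "Poly_Mapping.keys x \<union> Poly_Mapping.keys y"
  have "eps_id C (x + y) = (\<Sum>p\<in>?S. Poly_Mapping.single (snd p) (eps_val C (fst p) * Poly_Mapping.lookup (x + y) p))"
    by (rule eps_id_S) (auto simp: keys_add)
  also have "\<dots> = (\<Sum>p\<in>?S. Poly_Mapping.single (snd p) (eps_val C (fst p) * Poly_Mapping.lookup x p))
      + (\<Sum>p\<in>?S. Poly_Mapping.single (snd p) (eps_val C (fst p) * Poly_Mapping.lookup y p))"
    by (simp add: lookup_add distrib_left sum.distrib single_add)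
  also have "\<dots> = eps_id C x + eps_id C y" by (simp add: eps_id_S[symmetric])
  finally show ?thesis .
qed

lemma id_eps_add: "id_eps C (x + y) = id_eps C x + id_eps C (y :: _ \<Rightarrow>\<^sub>0 'r::comm_ring_1)"
proof -
  let ?S = "Poly_Mapping.keys x \<union> Poly_Mapping.keys y"
  have "id_eps C (x + y) = (\<Sum>p\<in>?S. Poly_Mapping.single (fst p) (Poly_Mapping.lookup (x + y) p * eps_val C (snd p)))"
    by (rule id_eps_S) (auto simp: keys_add)
  also have "\<dots> = (\<Sum>p\<in>?S. Poly_Mapping.single (fst p) (Poly_Mapping.lookup x p * eps_val C (snd p)))
      + (\<Sum>p\<in>?S. Poly_Mapping.single (fst p) (Poly_Mapping.lookup y p * eps_val C (snd p)))"
    by (simp add: lookup_add distrib_right sum.distrib single_add)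
  also have "\<dots> = id_eps C x + id_eps C y" by (simp add: id_eps_S[symmetric])
  finally show ?thesis .
qed

lemma eps_id_zero: "eps_id C (0 :: _ \<Rightarrow>\<^sub>0 'r::comm_ring_1) = 0" by (simp add: eps_id_def)
lemma id_eps_zero: "id_eps C (0 :: _ \<Rightarrow>\<^sub>0 'r::comm_ring_1) = 0" by (simp add: id_eps_def)

lemma eps_id_coprod_sum: "finite A \<Longrightarrow> eps_id C (coprod C (\<Sum>i\<in>A. (f i :: _ \<Rightarrow>\<^sub>0 'r::comm_ring_1))) = (\<Sum>i\<in>A. eps_id C (coprod C (f i)))"
  by (induction A rule: finite_induct) (auto simp: coprod_zero eps_id_zero coprod_add eps_id_add)

lemma id_eps_coprod_sum: "finite A \<Longrightarrow> id_eps C (coprod C (\<Sum>i\<in>A. (f i :: _ \<Rightarrow>\<^sub>0 'r::comm_ring_1))) = (\<Sum>i\<in>A. id_eps C (coprod C (f i)))"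
  by (induction A rule: finite_induct) (auto simp: coprod_zero id_eps_zero coprod_add id_eps_add)

lemma lookup_sum_single_D: "d \<in> decomps C p \<Longrightarrow> Poly_Mapping.lookup (\<Sum>d\<in>decomps C p. Poly_Mapping.single d (c::'r::comm_ring_1)) d = c"
  unfolding lookup_sum lookup_single using sum_when_eq[OF finite_decomps, of "\<lambda>_. c" d p]
  by (simp add: when_def eq_commute[of d])

lemma keys_sum_single_D: "Poly_Mapping.keys (\<Sum>d\<in>decomps C p. Poly_Mapping.single d (c::'r::comm_ring_1)) \<subseteq> decomps C p"
  using keys_sum[of "\<lambda>d. Poly_Mapping.single d c" "decomps C p"] by (auto split: if_splits)

end

context dcat begin

lemma left_single:
  assumes unit: "\<forall>X\<in>Ob C. (of_nat (card (Iso C X) * card (Aut C X)) :: 'r::comm_ring_1) dvd 1"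
    and p: "p \<in> Mor C"
  shows "eps_id C (coprod C (Poly_Mapping.single p (c::'r))) - Poly_Mapping.single p c \<in> Csim C"
proof -
  define D where "D = decomps C p"
  define Di where "Di = {d \<in> D. is_iso C (fst d)}"
  define e :: 'r where "e = unit_inv (of_nat (NN C (Dom C p)))"
  have fD: "finite D" unfolding D_def by (rule finite_decomps)
  have fDi: "finite Di" unfolding Di_def using fD by simp
  have eN: "of_nat (NN C (Dom C p)) * e = 1"
    unfolding e_def by (rule unit_inv_mult) (use unit dom_ob[OF p] in \<open>simp add: NN_def\<close>)
  have cDi: "card Di = NN C (Dom C p)" unfolding Di_def D_def by (rule card_Diso[OF p])
  have "eps_id C (coprod C (Poly_Mapping.single p c)) = (\<Sum>d\<in>D. Poly_Mapping.single (snd d) (eps_val C (fst d) * Poly_Mapping.lookup (\<Sum>d\<in>D. Poly_Mapping.single d c) d))"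
    unfolding coprod_single D_def by (rule eps_id_S[OF finite_decomps keys_sum_single_D])
  also have "\<dots> = (\<Sum>d\<in>D. Poly_Mapping.single (snd d) (eps_val C (fst d) * c))"
    unfolding D_def by (rule sum.cong) (auto simp: lookup_sum_single_D)
  also have "\<dots> = (\<Sum>d\<in>Di. Poly_Mapping.single (snd d) (eps_val C (fst d) * c))"
    unfolding Di_def by (rule sum.mono_neutral_right) (use fD in \<open>auto simp: eps_val_noniso\<close>)
  also have "\<dots> = (\<Sum>d\<in>Di. Poly_Mapping.single (snd d) (e * c))"
  proof (rule sum.cong[OF refl])
    fix d assume "d \<in> Di"
    then have "is_iso C (fst d)" "Dom C (fst d) = Dom C p" unfolding Di_def D_def using decomps_props
      by (auto, metis prod.collapse)
    then show "Poly_Mapping.single (snd d) (eps_val C (fst d) * c) = Poly_Mapping.single (snd d) (e * c)"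
      unfolding e_def by (simp add: eps_val_iso)
  qed
  also have "\<dots> = (\<Sum>d\<in>Di. Poly_Mapping.single p (e * c)) + (\<Sum>d\<in>Di. Poly_Mapping.single (snd d) (e * c) - Poly_Mapping.single p (e * c))"
    by (simp add: sum.distrib[symmetric])
  also have "(\<Sum>d\<in>Di. Poly_Mapping.single p (e * c)) = Poly_Mapping.single p c"
    unfolding sum_single_const cDi using eN by (simp add: mult.assoc[symmetric])
  finally have eq: "eps_id C (coprod C (Poly_Mapping.single p c)) - Poly_Mapping.single p c =
      (\<Sum>d\<in>Di. Poly_Mapping.single (snd d) (e * c) - Poly_Mapping.single p (e * c))" by simp
  show ?thesis unfolding eq Csim_def
  proof (rule lspan_sum[OF fDi])
    fix d assume d: "d \<in> Di"
    obtain a b where ab: "d = (a, b)" by fastforce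
    have "is_iso C a" "b \<in> Mor C" "Cod C a = Dom C b" "Comp C b a = p"
      using d ab decomps_props unfolding Di_def D_def by auto
    then have "mor_sim C b p" using ms_right[of b a] by simp
    then show "Poly_Mapping.single (snd d) (e * c) - Poly_Mapping.single p (e * c) \<in> lspan (sim_gens C)"
      using gen_Csim ab unfolding Csim_def by simp
  qed
qed

lemma right_single:
  assumes unit: "\<forall>X\<in>Ob C. (of_nat (card (Iso C X) * card (Aut C X)) :: 'r::comm_ring_1) dvd 1"
    and p: "p \<in> Mor C"
  shows "id_eps C (coprod C (Poly_Mapping.single p (c::'r))) - Poly_Mapping.single p c \<in> Csim C"
proof -
  define D where "D = decomps C p"
  define Di where "Di = {d \<in> D. is_iso C (snd d)}"
  define e :: 'r where "e = unit_inv (of_nat (NN C (Cod C p)))"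
  have fD: "finite D" unfolding D_def by (rule finite_decomps)
  have fDi: "finite Di" unfolding Di_def using fD by simp
  have eN: "of_nat (NN C (Cod C p)) * e = 1"
    unfolding e_def by (rule unit_inv_mult) (use unit cod_ob[OF p] in \<open>simp add: NN_def\<close>)
  have cDi: "card Di = NN C (Cod C p)" unfolding Di_def D_def by (rule card_Diso2[OF p])
  have "id_eps C (coprod C (Poly_Mapping.single p c)) = (\<Sum>d\<in>D. Poly_Mapping.single (fst d) (Poly_Mapping.lookup (\<Sum>d\<in>D. Poly_Mapping.single d c) d * eps_val C (snd d)))"
    unfolding coprod_single D_def by (rule id_eps_S[OF finite_decomps keys_sum_single_D])
  also have "\<dots> = (\<Sum>d\<in>D. Poly_Mapping.single (fst d) (c * eps_val C (snd d)))"
    unfolding D_def by (rule sum.cong) (auto simp: lookup_sum_single_D)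
  also have "\<dots> = (\<Sum>d\<in>Di. Poly_Mapping.single (fst d) (c * eps_val C (snd d)))"
    unfolding Di_def by (rule sum.mono_neutral_right) (use fD in \<open>auto simp: eps_val_noniso\<close>)
  also have "\<dots> = (\<Sum>d\<in>Di. Poly_Mapping.single (fst d) (e * c))"
  proof (rule sum.cong[OF refl])
    fix d assume "d \<in> Di"
    then have "is_iso C (snd d)" "Cod C (snd d) = Cod C p" unfolding Di_def D_def using decomps_props
      by (auto, metis prod.collapse)
    then show "Poly_Mapping.single (fst d) (c * eps_val C (snd d)) = Poly_Mapping.single (fst d) (e * c)"
      unfolding e_def by (simp add: eps_val_iso2 mult.commute)
  qed
  also have "\<dots> = (\<Sum>d\<in>Di. Poly_Mapping.single p (e * c)) + (\<Sum>d\<in>Di. Poly_Mapping.single (fst d) (e * c) - Poly_Mapping.single p (e * c))"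
    by (simp add: sum.distrib[symmetric])
  also have "(\<Sum>d\<in>Di. Poly_Mapping.single p (e * c)) = Poly_Mapping.single p c"
    unfolding sum_single_const cDi using eN by (simp add: mult.assoc[symmetric])
  finally have eq: "id_eps C (coprod C (Poly_Mapping.single p c)) - Poly_Mapping.single p c =
      (\<Sum>d\<in>Di. Poly_Mapping.single (fst d) (e * c) - Poly_Mapping.single p (e * c))" by simp
  show ?thesis unfolding eq Csim_def
  proof (rule lspan_sum[OF fDi])
    fix d assume d: "d \<in> Di"
    obtain a b where ab: "d = (a, b)" by fastforce
    have "is_iso C b" "a \<in> Mor C" "Cod C a = Dom C b" "Comp C b a = p"
      using d ab decomps_props unfolding Di_def D_def by auto
    then have "mor_sim C a p" using ms_left[of a b] by simp
    then show "Poly_Mapping.single (fst d) (e * c) - Poly_Mapping.single p (e * c) \<in> lspan (sim_gens C)"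
      using gen_Csim ab unfolding Csim_def by simp
  qed
qed

lemma part3b:
  assumes unit: "\<forall>X\<in>Ob C. (of_nat (card (Iso C X) * card (Aut C X)) :: 'r::comm_ring_1) dvd 1"
    and x: "(x :: _ \<Rightarrow>\<^sub>0 'r) \<in> free_mod C"
  shows "eps_id C (coprod C x) - x \<in> Csim C \<and> id_eps C (coprod C x) - x \<in> Csim C"
proof -
  let ?K = "Poly_Mapping.keys x"
  let ?s = "\<lambda>k. Poly_Mapping.single k (Poly_Mapping.lookup x k)"
  have K: "?K \<subseteq> Mor C" using x unfolding free_mod_def by auto
  have xs: "x = (\<Sum>k\<in>?K. ?s k)" by (rule poly_decomp)
  have "eps_id C (coprod C x) - x = (\<Sum>k\<in>?K. eps_id C (coprod C (?s k)) - ?s k)"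
    by (subst (1 2) xs) (simp add: eps_id_coprod_sum sum_subtractf)
  also have "\<dots> \<in> Csim C" unfolding Csim_def
    by (rule lspan_sum) (use left_single[OF unit] K in \<open>auto simp: Csim_def\<close>)
  finally have 1: "eps_id C (coprod C x) - x \<in> Csim C" .
  have "id_eps C (coprod C x) - x = (\<Sum>k\<in>?K. id_eps C (coprod C (?s k)) - ?s k)"
    by (subst (1 2) xs) (simp add: id_eps_coprod_sum sum_subtractf)
  also have "\<dots> \<in> Csim C" unfolding Csim_def
    by (rule lspan_sum) (use right_single[OF unit] K in \<open>auto simp: Csim_def\<close>)
  finally have 2: "id_eps C (coprod C x) - x \<in> Csim C" .
  show ?thesis using 1 2 by simp
qed

end

theorem proposition4p6:
  fixes C :: "('o, 'm) category"
  assumes cat: "is_category C"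
    and dfin: "decomposition_finite C"
  shows "(\<forall>x::'m \<Rightarrow>\<^sub>0 int. x \<in> Csim C \<longrightarrow>
            coprod C x \<in> sub_sum (tens_sub (free_mod C) (Csim C)) (tens_sub (Csim C) (free_mod C)))
    \<and> (\<forall>x::'m \<Rightarrow>\<^sub>0 int. x \<in> free_mod C \<longrightarrow>
            coprod_id C (coprod C x) = id_coprod C (coprod C x))
    \<and> ((\<forall>X\<in>Ob C. (of_nat (card (Iso C X) * card (Aut C X)) :: 'r::comm_ring_1) dvd 1) \<longrightarrow>
         (\<forall>c::'m \<Rightarrow>\<^sub>0 'r. c \<in> Csim C \<longrightarrow> eps C c = 0)
       \<and> (\<forall>x::'m \<Rightarrow>\<^sub>0 'r. x \<in> free_mod C \<longrightarrow>
            eps_id C (coprod C x) - x \<in> Csim C \<and> id_eps C (coprod C x) - x \<in> Csim C))"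
proof -
  interpret dcat C by unfold_locales (rule cat, rule dfin)
  show ?thesis using part1 coassoc part3a part3b by blast
qed

end
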